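(* Consider the dynamic setting: $K\ge2$, $\delta\in(0,1/K]$, $c,c_\eta>0$; $\mathbf z_t\in\Delta^{K-1}$, $|\widetilde f_t|\le c$, $\ell_t(\mathbf w)=-\widetilde f_t\mathbf w^\top\mathbf z_t$; $\widehat{\mathbf w}_1$ uniform and $\widehat{\mathbf w}_{t+1}=\arg\min_{\mathbf w\in\Delta^{K-1}}\{\eta_t\nabla\ell_t^\top\mathbf w+\mathrm{KL}(\mathbf w\|\widehat{\mathbf w}_t)\}$ with $\eta_t=\eta_0/\sqrt{1+c_\eta t}$; comparators $\mathbf w_1,\dots,\mathbf w_T$ and iterates $\widehat{\mathbf w}_1,\dots,\widehat{\mathbf w}_{T+1}$ all in $\Delta^{K-1}_\delta$. Let $V_T=\sum_{t=2}^T\|\mathbf w_t-\mathbf w_{t-1}\|_1$, $L_\delta=1+\log(1/\delta)$, $A_T:=\log(1/\delta)+L_\delta V_T$, $\eta_0=\sqrt{c_\eta A_T}/c$, and $R^{\mathrm{dyn}}_T=\sum_{t\le T}(\ell_t(\widehat{\mathbf w}_t)-\ell_t(\mathbf w_t))$. Then for any $\varepsilon>0$, $\frac1T R_T^{\mathrm{dyn}}\le\varepsilon$ holds whenever $$T\ge\frac{2}{\varepsilon^2}\left(c^2A_T+\sqrt{c^4A_T^2+\frac{\varepsilon^2c^2A_T}{c_\eta}}\right).$$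
   Context: $\Delta^{K-1}$ is the probability simplex; $\Delta^{K-1}_\delta=\{\mathbf w\in\Delta^{K-1}:w_k\ge\delta\ \forall k\}$; $\mathrm{KL}(\mathbf u\|\mathbf w)=\sum_k u_k\log(u_k/w_k)$. *)

theory Defs
  imports Complex_Main
begin

text \<open>Vectors in R^K are represented as functions nat => real, with coordinates k < K
  (coordinates k >= K are required to vanish for simplex members).\<close>

definition simplex :: "nat \<Rightarrow> (nat \<Rightarrow> real) set" where
  "simplex K = {w. (\<forall>k<K. 0 \<le> w k) \<and> (\<forall>k\<ge>K. w k = 0) \<and> (\<Sum>k<K. w k) = 1}"

definition simplex_delta :: "nat \<Rightarrow> real \<Rightarrow> (nat \<Rightarrow> real) set" where
  "simplex_delta K \<delta> = {w \<in> simplex K. \<forall>k<K. \<delta> \<le> w k}"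

text \<open>KL divergence, with the convention 0 log(0/w) = 0 (automatic since ln 0 = 0 in Isabelle).\<close>
definition KL :: "nat \<Rightarrow> (nat \<Rightarrow> real) \<Rightarrow> (nat \<Rightarrow> real) \<Rightarrow> real" where
  "KL K u w = (\<Sum>k<K. u k * ln (u k / w k))"

definition dotK :: "nat \<Rightarrow> (nat \<Rightarrow> real) \<Rightarrow> (nat \<Rightarrow> real) \<Rightarrow> real" where
  "dotK K u v = (\<Sum>k<K. u k * v k)"

definition l1dist :: "nat \<Rightarrow> (nat \<Rightarrow> real) \<Rightarrow> (nat \<Rightarrow> real) \<Rightarrow> real" where
  "l1dist K u v = (\<Sum>k<K. \<bar>u k - v k\<bar>)"

definition path_length :: "nat \<Rightarrow> (nat \<Rightarrow> nat \<Rightarrow> real) \<Rightarrow> nat \<Rightarrow> real" where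
  "path_length K w T = (\<Sum>t=2..T. l1dist K (w t) (w (t - 1)))"

definition lin_loss :: "nat \<Rightarrow> real \<Rightarrow> (nat \<Rightarrow> real) \<Rightarrow> (nat \<Rightarrow> real) \<Rightarrow> real" where
  "lin_loss K f z w = - f * dotK K w z"

end

theory Submission
  imports Defs
begin
lemma exp_quad: fixes x :: real assumes "x \<le> 0" shows "exp x \<le> 1 + x + x\<^sup>2 / 2"
proof -
  let ?f = "\<lambda>y::real. 1 + y + y\<^sup>2/2 - exp y"
  have "?f 0 \<le> ?f x"
  proof (rule DERIV_nonpos_imp_nonincreasing[OF assms])
    fix y :: real assume "x \<le> y" "y \<le> 0"
    show "\<exists>d. DERIV ?f y :> d \<and> d \<le> 0"
      by (rule exI[of _ "1 + y - exp y"]) (auto intro!: derivative_eq_intros simp: algebra_simps)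
  qed
  then show ?thesis by simp
qed

lemma uln: fixes u p :: real assumes "0 \<le> u" "0 < p" shows "u - p \<le> u * ln (u / p)"
proof (cases "u = 0")
  case True then show ?thesis using assms by simp
next
  case False
  then have u: "u > 0" using assms by simp
  have "ln (p / u) \<le> p / u - 1" using ln_le_minus_one[of "p/u"] u assms by simp
  moreover have "ln (u/p) = - ln (p/u)" using u assms by (simp add: ln_div)
  ultimately have "u * ln (u/p) \<ge> u * (1 - p/u)" using u by (intro mult_left_mono) auto
  moreover have "u * (1 - p/u) = u - p" using u by (simp add: field_simps)
  ultimately show ?thesis by linarith
qed

lemma simplex_le1: assumes "w \<in> simplex K" "k < K" shows "w k \<le> 1"
proof -
  have "w k \<le> (\<Sum>j<K. w j)"
    using assms by (intro member_le_sum) (auto simp: simplex_def)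
  then show ?thesis using assms by (simp add: simplex_def)
qed

lemma KL_nonneg: assumes "u \<in> simplex K" "p \<in> simplex K" "\<forall>k<K. 0 < p k"
  shows "0 \<le> KL K u p"
proof -
  have "(\<Sum>k<K. u k - p k) \<le> KL K u p"
    unfolding KL_def using assms by (intro sum_mono uln) (auto simp: simplex_def)
  moreover have "(\<Sum>k<K. u k - p k) = 0" using assms by (simp add: sum_subtractf simplex_def)
  ultimately show ?thesis by simp
qed

lemma KL_le: assumes "u \<in> simplex K" "p \<in> simplex_delta K \<delta>" "0 < \<delta>"
  shows "KL K u p \<le> ln (1 / \<delta>)"
proof -
  have "KL K u p \<le> (\<Sum>k<K. u k * ln (1/\<delta>))"
    unfolding KL_def
  proof (intro sum_mono)
    fix k assume k: "k \<in> {..<K}"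
    have u0: "0 \<le> u k" and u1: "u k \<le> 1" using assms k simplex_le1[of u K k] by (auto simp: simplex_def)
    have pd: "\<delta> \<le> p k" using assms k by (auto simp: simplex_delta_def)
    show "u k * ln (u k / p k) \<le> u k * ln (1 / \<delta>)"
    proof (cases "u k = 0")
      case False
      then have "u k > 0" using u0 by simp
      moreover have "u k / p k \<le> 1 / \<delta>" using u1 pd assms(3) \<open>u k > 0\<close>
        by (simp add: frac_le)
      ultimately show ?thesis using pd assms(3) by (intro mult_left_mono) auto
    qed simp
  qed
  also have "\<dots> = ln (1/\<delta>)" using assms by (simp add: sum_distrib_right[symmetric] simplex_def)
  finally show ?thesis .
qed

lemma KL_lip: assumes "a \<in> simplex_delta K \<delta>" "b \<in> simplex_delta K \<delta>" "p \<in> simplex_delta K \<delta>" "0 < \<delta>"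
  shows "KL K a p - KL K b p \<le> (1 + ln (1/\<delta>)) * l1dist K a b"
proof -
  have "KL K a p - KL K b p = (\<Sum>k<K. a k * ln (a k / p k) - b k * ln (b k / p k))"
    by (simp add: KL_def sum_subtractf)
  also have "\<dots> \<le> (\<Sum>k<K. (1 + ln (1/\<delta>)) * \<bar>a k - b k\<bar>)"
  proof (intro sum_mono)
    fix k assume k: "k \<in> {..<K}"
    have ad: "\<delta> \<le> a k" "\<delta> \<le> b k" "\<delta> \<le> p k" using assms k by (auto simp: simplex_delta_def)
    have a1: "a k \<le> 1" using assms k simplex_le1[of a K k] by (auto simp: simplex_delta_def)
    have pos: "a k > 0" "b k > 0" "p k > 0" using ad assms(4) by auto
    have "b k - a k \<le> b k * ln (b k / a k)" using uln[of "b k" "a k"] pos by simp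
    moreover have "ln (b k / a k) = ln (b k / p k) - ln (a k / p k)"
      using pos by (simp add: ln_div)
    ultimately have h: "a k * ln (a k / p k) - b k * ln (b k / p k) \<le> (ln (a k / p k) + 1) * (a k - b k)"
      by (simp add: algebra_simps)
    have up: "ln (a k / p k) \<le> ln (1/\<delta>)"
      using pos a1 ad assms(4) by (subst ln_le_cancel_iff) (auto simp: frac_le)
    have lo: "ln (a k / p k) \<ge> ln \<delta>"
    proof -
      have "p k \<le> 1" using assms k simplex_le1[of p K k] by (auto simp: simplex_delta_def)
      then have "a k * p k \<le> a k" using pos by (simp add: mult_left_le)
      then have "a k \<le> a k / p k" using pos by (simp add: le_divide_eq)
      then have "\<delta> \<le> a k / p k" using ad by simp
      then show ?thesis using assms(4) pos by (subst ln_le_cancel_iff) auto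
    qed
    have "ln \<delta> = - ln (1/\<delta>)" using assms(4) by (simp add: ln_div)
    then have "\<bar>ln (a k / p k) + 1\<bar> \<le> 1 + ln (1/\<delta>)" using up lo ln_ge_zero[of "1/\<delta>"] by auto
    then have "(ln (a k / p k) + 1) * (a k - b k) \<le> (1 + ln (1/\<delta>)) * \<bar>a k - b k\<bar>"
    proof -
      have "(ln (a k / p k) + 1) * (a k - b k) \<le> \<bar>ln (a k / p k) + 1\<bar> * \<bar>a k - b k\<bar>"
        by (metis abs_ge_self abs_mult)
      also have "\<dots> \<le> (1 + ln (1/\<delta>)) * \<bar>a k - b k\<bar>"
        by (rule mult_right_mono) (use \<open>\<bar>ln (a k / p k) + 1\<bar> \<le> 1 + ln (1/\<delta>)\<close> in auto)
      finally show ?thesis .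
    qed
    with h show "a k * ln (a k / p k) - b k * ln (b k / p k) \<le> (1 + ln (1/\<delta>)) * \<bar>a k - b k\<bar>" by simp
  qed
  also have "\<dots> = (1 + ln (1/\<delta>)) * l1dist K a b" by (simp add: l1dist_def sum_distrib_left)
  finally show ?thesis .
qed
lemma simplex_pos_ex: assumes "p \<in> simplex K" shows "\<exists>k<K. 0 < p k"
proof (rule ccontr)
  assume "\<not> ?thesis"
  then have "\<forall>k<K. p k = 0" using assms by (force simp: simplex_def)
  then have "(\<Sum>k<K. p k) = 0" by simp
  then show False using assms by (simp add: simplex_def)
qed

lemma lnZ:
  fixes p g :: "nat \<Rightarrow> real"
  assumes p: "p \<in> simplex K" and g: "\<forall>k<K. a \<le> g k \<and> g k \<le> a + c" and eta: "0 \<le> \<eta>"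
  shows "0 < (\<Sum>k<K. p k * exp (- \<eta> * g k))"
    and "ln (\<Sum>k<K. p k * exp (- \<eta> * g k)) \<le> - \<eta> * (\<Sum>k<K. p k * g k) + \<eta>\<^sup>2 * c\<^sup>2 / 2"
proof -
  have p0: "\<forall>k<K. 0 \<le> p k" and ps: "(\<Sum>k<K. p k) = 1" using p by (auto simp: simplex_def)
  obtain k0 where k0: "k0 < K" "0 < p k0" using simplex_pos_ex[OF p] by blast
  show Zpos: "0 < (\<Sum>k<K. p k * exp (- \<eta> * g k))"
    by (rule sum_pos2[of _ k0]) (use k0 p0 in auto)
  define X where "X k = - \<eta> * (g k - a)" for k
  have X0: "X k \<le> 0" if "k < K" for k using g that eta unfolding X_def
    by (simp add: mult_nonneg_nonneg)
  have X2: "(X k)\<^sup>2 \<le> \<eta>\<^sup>2 * c\<^sup>2" if "k < K" for k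
  proof -
    have "\<bar>X k\<bar> \<le> \<eta> * c" using g that eta unfolding X_def
      by (simp add: abs_mult) (intro mult_left_mono, auto)
    then have "\<bar>X k\<bar>\<^sup>2 \<le> (\<eta> * c)\<^sup>2" by (intro power_mono) auto
    then show ?thesis by (simp add: power_mult_distrib)
  qed
  have e: "exp (- \<eta> * g k) = exp (- \<eta> * a) * exp (X k)" for k
    unfolding X_def by (simp add: exp_add[symmetric] algebra_simps)
  have "(\<Sum>k<K. p k * exp (X k)) \<le> (\<Sum>k<K. p k * (1 + X k + \<eta>\<^sup>2 * c\<^sup>2 / 2))"
  proof (intro sum_mono mult_left_mono)
    fix k assume k: "k \<in> {..<K}"
    have "exp (X k) \<le> 1 + X k + (X k)\<^sup>2 / 2" using exp_quad X0 k by auto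
    then show "exp (X k) \<le> 1 + X k + \<eta>\<^sup>2 * c\<^sup>2 / 2" using X2[of k] k by auto
    show "0 \<le> p k" using p0 k by auto
  qed
  also have "\<dots> = 1 + (\<Sum>k<K. p k * X k) + \<eta>\<^sup>2 * c\<^sup>2 / 2"
  proof -
    have "(\<Sum>k<K. p k * (1 + X k + \<eta>\<^sup>2 * c\<^sup>2 / 2)) = (\<Sum>k<K. p k) + (\<Sum>k<K. p k * X k) + (\<Sum>k<K. p k) * (\<eta>\<^sup>2 * c\<^sup>2 / 2)"
      by (simp only: distrib_left sum.distrib sum_distrib_right mult_1_right)
    then show ?thesis using ps by simp
  qed
  also have "\<dots> \<le> exp ((\<Sum>k<K. p k * X k) + \<eta>\<^sup>2 * c\<^sup>2 / 2)"
    using exp_ge_add_one_self by (simp add: add.assoc)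
  finally have h: "(\<Sum>k<K. p k * exp (X k)) \<le> exp ((\<Sum>k<K. p k * X k) + \<eta>\<^sup>2 * c\<^sup>2 / 2)" .
  have sX: "(\<Sum>k<K. p k * X k) = - \<eta> * (\<Sum>k<K. p k * g k) + \<eta> * a"
    unfolding X_def by (simp add: algebra_simps sum.distrib sum_subtractf sum_distrib_left[symmetric] ps)
  have "(\<Sum>k<K. p k * exp (- \<eta> * g k)) = exp (- \<eta> * a) * (\<Sum>k<K. p k * exp (X k))"
    unfolding sum_distrib_left by (intro sum.cong refl) (simp only: e mult_ac)
  also have "\<dots> \<le> exp (- \<eta> * a) * exp ((\<Sum>k<K. p k * X k) + \<eta>\<^sup>2 * c\<^sup>2 / 2)"
    using h by simp
  also have "\<dots> = exp (- \<eta> * (\<Sum>k<K. p k * g k) + \<eta>\<^sup>2 * c\<^sup>2 / 2)"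
    by (simp add: sX exp_add[symmetric])
  finally have "(\<Sum>k<K. p k * exp (- \<eta> * g k)) \<le> exp (- \<eta> * (\<Sum>k<K. p k * g k) + \<eta>\<^sup>2 * c\<^sup>2 / 2)" .
  then show "ln (\<Sum>k<K. p k * exp (- \<eta> * g k)) \<le> - \<eta> * (\<Sum>k<K. p k * g k) + \<eta>\<^sup>2 * c\<^sup>2 / 2"
    using Zpos by (metis exp_gt_zero ln_exp ln_le_cancel_iff)
qed
lemma step_bound:
  fixes p q u g :: "nat \<Rightarrow> real"
  assumes p: "p \<in> simplex_delta K \<delta>" and q: "q \<in> simplex_delta K \<delta>" and u: "u \<in> simplex K"
    and dpos: "0 < \<delta>" and eta: "0 < \<eta>"
    and g: "\<forall>k<K. a \<le> g k \<and> g k \<le> a + c"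
    and am: "is_arg_min (\<lambda>v. \<eta> * dotK K g v + KL K v p) (\<lambda>v. v \<in> simplex K) q"
  shows "\<eta> * (dotK K g p - dotK K g u) \<le> KL K u p - KL K u q + \<eta>\<^sup>2 * c\<^sup>2 / 2"
proof -
  have ps: "p \<in> simplex K" and qs': "q \<in> simplex K" using p q by (auto simp: simplex_delta_def)
  have ppos: "\<forall>k<K. 0 < p k" and qpos: "\<forall>k<K. 0 < q k"
    using p q dpos by (auto simp: simplex_delta_def intro: less_le_trans)
  define e where "e k = exp (- \<eta> * g k)" for k
  define Z where "Z = (\<Sum>k<K. p k * e k)"
  have Zpos: "0 < Z" and lnZ: "ln Z \<le> - \<eta> * (\<Sum>k<K. p k * g k) + \<eta>\<^sup>2 * c\<^sup>2 / 2"
    using lnZ[OF ps g less_imp_le[OF eta]] unfolding Z_def e_def by auto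
  define r where "r k = (if k < K then p k * e k / Z else 0)" for k
  have rpos: "0 < r k" if "k < K" for k using that ppos Zpos by (simp add: r_def e_def)
  have r: "r \<in> simplex K"
  proof -
    have "(\<Sum>k<K. r k) = (\<Sum>k<K. p k * e k / Z)" by (simp add: r_def)
    also have "\<dots> = 1" using Zpos by (simp add: Z_def sum_divide_distrib[symmetric])
    finally show ?thesis using rpos by (auto simp: simplex_def r_def less_imp_le)
  qed
  have lnr: "ln (r k / p k) = - \<eta> * g k - ln Z" if "k < K" for k
  proof -
    have "p k > 0" using that ppos by auto
    then have "r k / p k = e k / Z" using that by (simp add: r_def)
    then show ?thesis using Zpos by (simp add: e_def ln_div)
  qed
  let ?F = "\<lambda>v. \<eta> * dotK K g v + KL K v p"
  have Fr: "?F r = - ln Z"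
  proof -
    have "?F r = (\<Sum>k<K. r k * (- ln Z))"
      unfolding dotK_def KL_def sum_distrib_left sum.distrib[symmetric]
      by (intro sum.cong refl) (simp add: lnr algebra_simps)
    also have "\<dots> = (\<Sum>k<K. r k) * (- ln Z)" by (simp only: sum_distrib_right[symmetric])
    also have "\<dots> = - ln Z" using r by (simp add: simplex_def)
    finally show ?thesis .
  qed
  have Fq: "?F q = KL K q r - ln Z"
  proof -
    have "?F q = (\<Sum>k<K. q k * ln (q k / r k) + q k * (- ln Z))"
      unfolding dotK_def KL_def sum_distrib_left sum.distrib[symmetric]
    proof (intro sum.cong refl)
      fix k assume k: "k \<in> {..<K}"
      have "0 < q k" "0 < p k" "0 < r k" using k qpos ppos rpos[of k] by auto
      then have "ln (q k / p k) = ln (q k / r k) + ln (r k / p k)"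
        by (simp add: ln_div)
      moreover have "ln (r k / p k) = - \<eta> * g k - ln Z" using lnr[of k] k by simp
      ultimately show "\<eta> * (g k * q k) + q k * ln (q k / p k) = q k * ln (q k / r k) + q k * - ln Z"
        by (simp only:) (simp add: algebra_simps)
    qed
    also have "\<dots> = KL K q r + (\<Sum>k<K. q k) * (- ln Z)"
      by (simp only: sum.distrib KL_def sum_distrib_right[symmetric])
    also have "\<dots> = KL K q r - ln Z" using qs' by (simp add: simplex_def)
    finally show ?thesis .
  qed
  have "?F q \<le> ?F r" using am r by (auto simp: is_arg_min_def not_less)
  then have KLqr: "KL K q r \<le> 0" using Fq Fr by simp
  have qr: "q k = r k" if k: "k < K" for k
  proof -
    define t where "t j = q j * ln (q j / r j) - (q j - r j)" for j
    have t0: "\<forall>j\<in>{..<K}. 0 \<le> t j" using uln qpos rpos by (auto simp: t_def less_imp_le)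
    have "(\<Sum>j<K. t j) = KL K q r - ((\<Sum>j<K. q j) - (\<Sum>j<K. r j))"
      by (simp add: t_def KL_def sum_subtractf)
    also have "\<dots> = KL K q r" using qs' r by (simp add: simplex_def)
    finally have "(\<Sum>j<K. t j) \<le> 0" using KLqr by simp
    moreover have "0 \<le> (\<Sum>j<K. t j)" using t0 by (intro sum_nonneg) auto
    ultimately have "(\<Sum>j<K. t j) = 0" by linarith
    then have "t k = 0" using sum_nonneg_eq_0_iff[of "{..<K}" t] t0 k by auto
    then have h: "q k * ln (q k / r k) = q k - r k" by (simp add: t_def)
    have qk: "0 < q k" "0 < r k" using qpos rpos k by auto
    have "ln (r k / q k) = - ln (q k / r k)" using qk by (simp add: ln_div)
    also have "\<dots> = r k / q k - 1" using h qk by (simp add: field_simps)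
    finally have "r k / q k = 1" using ln_eq_minus_one[of "r k / q k"] qk by simp
    then show ?thesis using qk by simp
  qed
  have "KL K u p - KL K u q = (\<Sum>k<K. u k * (- \<eta> * g k - ln Z))"
    unfolding KL_def sum_subtractf[symmetric]
  proof (intro sum.cong refl)
    fix k assume k: "k \<in> {..<K}"
    show "u k * ln (u k / p k) - u k * ln (u k / q k) = u k * (- \<eta> * g k - ln Z)"
    proof (cases "u k = 0")
      case False
      then have "u k > 0" using u k by (auto simp: simplex_def order_le_less)
      moreover have "0 < q k" "0 < p k" "q k = r k" using k qpos ppos qr[of k] by auto
      ultimately have "ln (u k / p k) - ln (u k / q k) = ln (r k / p k)"
        by (simp add: ln_div)
      then show ?thesis using lnr[of k] k by (simp add: right_diff_distrib[symmetric])
    qed simp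
  qed
  also have "\<dots> = (\<Sum>k<K. (- \<eta>) * (g k * u k) - u k * ln Z)"
    by (intro sum.cong refl) (simp add: algebra_simps)
  also have "\<dots> = (\<Sum>k<K. (- \<eta>) * (g k * u k)) - (\<Sum>k<K. u k) * ln Z"
    by (simp only: sum_subtractf sum_distrib_right)
  also have "\<dots> = - \<eta> * dotK K g u - ln Z" using u
    by (simp only: dotK_def sum_distrib_left[symmetric]) (simp add: simplex_def)
  finally have "KL K u p - KL K u q = - \<eta> * dotK K g u - ln Z" .
  moreover have "dotK K g p = (\<Sum>k<K. p k * g k)" by (simp add: dotK_def mult.commute)
  ultimately show ?thesis using lnZ by (simp add: algebra_simps)
qed
lemma telescope:
  fixes D E s d :: "nat \<Rightarrow> real"
  assumes E: "\<forall>t\<in>{1..T}. 0 \<le> E t \<and> E t \<le> B"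
    and D1: "D 1 \<le> B"
    and Dt: "\<forall>t\<in>{2..T}. D t \<le> E (t - 1) + L * d t"
    and s0: "\<forall>t. 0 \<le> s t" and smono: "\<forall>t. s t \<le> s (Suc t)"
    and L: "0 \<le> L" and d0: "\<forall>t. 0 \<le> d t"
  shows "n \<in> {1..T} \<Longrightarrow> (\<Sum>t=1..n. (D t - E t) * s t) \<le> (B + L * (\<Sum>t=2..n. d t)) * s n - E n * s n"
proof (induction n)
  case 0 then show ?case by simp
next
  case (Suc n)
  show ?case
  proof (cases "n = 0")
    case True
    have "(D 1 - E 1) * s 1 \<le> (B - E 1) * s 1" using D1 s0 by (intro mult_right_mono) auto
    then show ?thesis using True by (simp add: algebra_simps)
  next
    case False
    then have n: "n \<in> {1..T}" using Suc.prems by auto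
    have IH: "(\<Sum>t=1..n. (D t - E t) * s t) \<le> (B + L * (\<Sum>t=2..n. d t)) * s n - E n * s n"
      using Suc.IH n by blast
    let ?P = "\<Sum>t=2..n. d t"
    have P0: "0 \<le> ?P" using d0 by (simp add: sum_nonneg)
    have "Suc n \<in> {2..T}" using Suc.prems False by auto
    then have Dn: "D (Suc n) \<le> E n + L * d (Suc n)" using Dt by fastforce
    have En: "0 \<le> E n" "E n \<le> B" using E n by auto
    have h1: "D (Suc n) * s (Suc n) \<le> (E n + L * d (Suc n)) * s (Suc n)"
      using Dn s0 by (intro mult_right_mono) auto
    have h2: "(B - E n) * s n \<le> (B - E n) * s (Suc n)" using En smono by (intro mult_left_mono) auto
    have h3: "(L * ?P) * s n \<le> (L * ?P) * s (Suc n)" using L P0 smono by (intro mult_left_mono) auto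
    have split: "(\<Sum>t=1..Suc n. (D t - E t) * s t) = (\<Sum>t=1..n. (D t - E t) * s t) + (D (Suc n) - E (Suc n)) * s (Suc n)"
      using n by (simp add: sum.cl_ivl_Suc)
    have splitd: "(\<Sum>t=2..Suc n. d t) = ?P + d (Suc n)"
      using False by (simp add: sum.cl_ivl_Suc)
    show ?thesis unfolding split splitd
      using IH h1 h2 h3 by (simp add: algebra_simps)
  qed
qed

lemma sqrt_sum:
  fixes c :: real assumes c: "0 < c"
  shows "(\<Sum>t=1..n. 1 / sqrt (1 + c * real t)) \<le> 2 / c * (sqrt (1 + c * real n) - 1)"
proof (induction n)
  case 0 then show ?case by simp
next
  case (Suc n)
  define a where "a = sqrt (1 + c * real n)"
  define b where "b = sqrt (1 + c * real (Suc n))"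
  have a1: "1 \<le> a" unfolding a_def using c by simp
  have ab: "a \<le> b" unfolding a_def b_def using c by simp
  have sq: "b\<^sup>2 - a\<^sup>2 = c" unfolding a_def b_def using c by (simp add: algebra_simps)
  have "c \<le> 2 * b * (b - a)"
  proof -
    have "0 \<le> (b - a)\<^sup>2" by simp
    then show ?thesis using sq by (simp add: power2_eq_square algebra_simps)
  qed
  then have "1 / b \<le> 2 / c * (b - a)" using a1 ab c by (simp add: field_simps)
  then have "(\<Sum>t=1..Suc n. 1 / sqrt (1 + c * real t)) \<le> 2 / c * (a - 1) + 2 / c * (b - a)"
    using Suc.IH by (simp add: a_def b_def del: of_nat_Suc)
  also have "\<dots> = 2 / c * (b - 1)" by (simp add: right_diff_distrib)
  finally show ?case by (simp add: b_def)
qed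
theorem corollaryB3:
  fixes K T :: nat and \<delta> c c\<eta> \<epsilon> \<eta>0 A :: real
    and f :: "nat \<Rightarrow> real" and z w what :: "nat \<Rightarrow> nat \<Rightarrow> real" and \<eta> :: "nat \<Rightarrow> real"
  assumes K: "K \<ge> 2"
    and delta: "0 < \<delta>" "\<delta> \<le> 1 / real K"
    and c: "c > 0" and ceta: "c\<eta> > 0"
    and z: "\<forall>t\<in>{1..T}. z t \<in> simplex K"
    and f: "\<forall>t\<in>{1..T}. \<bar>f t\<bar> \<le> c"
    and A_def: "A = ln (1 / \<delta>) + (1 + ln (1 / \<delta>)) * path_length K w T"
    and eta0_def: "\<eta>0 = sqrt (c\<eta> * A) / c"
    and eta_def: "\<forall>t. \<eta> t = \<eta>0 / sqrt (1 + c\<eta> * real t)"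
    and init: "what 1 = (\<lambda>k. if k < K then 1 / real K else 0)"
    and step: "\<forall>t\<in>{1..T}. is_arg_min
                 (\<lambda>v. \<eta> t * dotK K (\<lambda>k. - f t * z t k) v + KL K v (what t))
                 (\<lambda>v. v \<in> simplex K) (what (Suc t))"
    and comp: "\<forall>t\<in>{1..T}. w t \<in> simplex_delta K \<delta>"
    and iter: "\<forall>t\<in>{1..T+1}. what t \<in> simplex_delta K \<delta>"
    and eps: "\<epsilon> > 0"
    and Tbig: "real T \<ge> 2 / \<epsilon>\<^sup>2 * (c\<^sup>2 * A + sqrt (c ^ 4 * A\<^sup>2 + \<epsilon>\<^sup>2 * c\<^sup>2 * A / c\<eta>))"
  shows "(1 / real T) * (\<Sum>t=1..T. lin_loss K (f t) (z t) (what t) - lin_loss K (f t) (z t) (w t)) \<le> \<epsilon>"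
proof -
  have Kpos: "0 < real K" using K by simp
  have dinv: "2 \<le> 1 / \<delta>"
  proof -
    have "real K \<le> 1 / \<delta>" using delta Kpos by (simp add: field_simps)
    then show ?thesis using K by linarith
  qed
  have lnpos: "0 < ln (1 / \<delta>)" using dinv by (intro ln_gt_zero) simp
  define B where "B = ln (1 / \<delta>)"
  define L where "L = 1 + ln (1 / \<delta>)"
  define d where "d t = l1dist K (w t) (w (t - 1))" for t
  have d0: "\<forall>t. 0 \<le> d t" by (simp add: d_def l1dist_def sum_nonneg)
  have PL: "path_length K w T = (\<Sum>t=2..T. d t)" by (simp add: path_length_def d_def)
  have P0: "0 \<le> path_length K w T" using d0 PL by (simp add: sum_nonneg)
  have L0: "0 \<le> L" using lnpos by (simp add: L_def)
  have Apos: "0 < A" using A_def lnpos P0 L0 L_def by (simp add: add_pos_nonneg)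
  have eta0pos: "0 < \<eta>0" using eta0_def Apos ceta c by simp
  have ct: "0 \<le> c\<eta> * real t" for t using ceta by simp
  have sq1: "0 < sqrt (1 + c\<eta> * real t)" for t using ct[of t] by simp
  have etapos: "0 < \<eta> t" for t using eta_def eta0pos sq1[of t] by simp
  define s where "s t = 1 / \<eta> t" for t
  have s_eq: "s t = sqrt (1 + c\<eta> * real t) / \<eta>0" for t using eta_def by (simp add: s_def)
  have s0: "\<forall>t. 0 \<le> s t" using etapos by (simp add: s_def less_imp_le)
  have smono: "\<forall>t. s t \<le> s (Suc t)"
  proof
    fix t
    have "sqrt (1 + c\<eta> * real t) \<le> sqrt (1 + c\<eta> * real (Suc t))"
      using ceta by simp
    then show "s t \<le> s (Suc t)" unfolding s_eq using eta0pos by (simp add: divide_right_mono)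
  qed
  define g where "g t k = - f t * z t k" for t k
  define a where "a t = min 0 (- f t)" for t
  have gb: "\<forall>k<K. a t \<le> g t k \<and> g t k \<le> a t + c" if t: "t \<in> {1..T}" for t
  proof (intro allI impI)
    fix k assume k: "k < K"
    have z0: "0 \<le> z t k" and z1: "z t k \<le> 1"
      using z t k simplex_le1[of "z t" K k] by (auto simp: simplex_def)
    have fc: "\<bar>f t\<bar> \<le> c" using f t by auto
    show "a t \<le> g t k \<and> g t k \<le> a t + c"
    proof (cases "0 \<le> f t")
      case True
      have "f t * z t k \<le> f t" using True z1 by (simp add: mult_left_le)
      moreover have "0 \<le> f t * z t k" using True z0 by simp
      ultimately show ?thesis using True fc by (auto simp: a_def g_def)
    next
      case False
      have h1: "(- f t) * z t k \<le> - f t" using False z1 by (intro mult_left_le) auto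
      have h2: "0 \<le> (- f t) * z t k" using False z0 by (intro mult_nonneg_nonneg) auto
      have "g t k = (- f t) * z t k" "a t = 0" using False by (auto simp: g_def a_def)
      then show ?thesis using h1 h2 fc False by linarith
    qed
  qed
  have loss: "lin_loss K (f t) (z t) v = dotK K (g t) v" for t v
    by (simp add: lin_loss_def dotK_def g_def sum_distrib_left algebra_simps)
  define D where "D t = KL K (w t) (what t)" for t
  define E where "E t = KL K (w t) (what (Suc t))" for t
  have wS: "w t \<in> simplex K" if "t \<in> {1..T}" for t using comp that by (auto simp: simplex_delta_def)
  have whS: "what t \<in> simplex K" "\<forall>k<K. 0 < what t k" if "t \<in> {1..T+1}" for t
    using iter that delta(1) by (auto simp: simplex_delta_def intro: less_le_trans)
  have per: "lin_loss K (f t) (z t) (what t) - lin_loss K (f t) (z t) (w t)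
      \<le> (D t - E t) * s t + c\<^sup>2 / 2 * \<eta> t" if t: "t \<in> {1..T}" for t
  proof -
    have p: "what t \<in> simplex_delta K \<delta>" and q: "what (Suc t) \<in> simplex_delta K \<delta>"
      using iter t by auto
    have h: "\<eta> t * (dotK K (g t) (what t) - dotK K (g t) (w t)) \<le> D t - E t + (\<eta> t)\<^sup>2 * c\<^sup>2 / 2"
      unfolding D_def E_def
      by (rule step_bound[OF p q wS[OF t] delta(1) etapos gb[OF t]])
         (use step t in \<open>auto simp: g_def\<close>)
    have "dotK K (g t) (what t) - dotK K (g t) (w t) \<le> (D t - E t + (\<eta> t)\<^sup>2 * c\<^sup>2 / 2) / \<eta> t"
      using h etapos[of t] by (simp add: field_simps)
    also have "\<dots> = (D t - E t) * s t + c\<^sup>2 / 2 * \<eta> t"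
      using etapos[of t] by (simp add: s_def field_simps power2_eq_square)
    finally show ?thesis by (simp add: loss)
  qed
  have tele: "(\<Sum>t=1..T. (D t - E t) * s t) \<le> (B + L * (\<Sum>t=2..T. d t)) * s T - E T * s T"
    if T1: "T \<in> {1..T}"
  proof (rule telescope[OF _ _ _ s0 smono L0 d0 T1])
    show "\<forall>t\<in>{1..T}. 0 \<le> E t \<and> E t \<le> B"
    proof
      fix t assume t: "t \<in> {1..T}"
      have "Suc t \<in> {1..T+1}" using t by auto
      then show "0 \<le> E t \<and> E t \<le> B"
        unfolding E_def B_def
        using KL_nonneg[OF wS[OF t] whS(1)[of "Suc t"]] whS(2)[of "Suc t"]
              KL_le[OF wS[OF t] _ delta(1)] iter by auto
    qed
    show "D 1 \<le> B" unfolding D_def B_def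
    proof (cases "T = 0")
      case False
      then show "KL K (w 1) (what 1) \<le> ln (1 / \<delta>)"
        using KL_le[OF wS[of 1] _ delta(1)] iter by auto
    qed (use T1 in auto)
    show "\<forall>t\<in>{2..T}. D t \<le> E (t - 1) + L * d t"
    proof
      fix t assume t: "t \<in> {2..T}"
      have "KL K (w t) (what t) - KL K (w (t-1)) (what t) \<le> L * l1dist K (w t) (w (t - 1))"
      proof -
        have "t - 1 \<in> {1..T}" "t \<in> {1..T}" "t \<in> {1..T+1}" using t by auto
        then show ?thesis unfolding L_def using comp iter by (intro KL_lip[OF _ _ _ delta(1)]) auto
      qed
      moreover have "Suc (t - 1) = t" using t by auto
      ultimately show "D t \<le> E (t - 1) + L * d t" by (simp add: D_def E_def d_def)
    qed
  qed
  have Warg: "0 \<le> c ^ 4 * A\<^sup>2 + \<epsilon>\<^sup>2 * c\<^sup>2 * A / c\<eta>"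
    using ceta Apos by (intro add_nonneg_nonneg divide_nonneg_pos mult_nonneg_nonneg) auto
  have Tpos: "0 < T"
  proof -
    have "0 < 2 / \<epsilon>\<^sup>2 * (c\<^sup>2 * A + sqrt (c ^ 4 * A\<^sup>2 + \<epsilon>\<^sup>2 * c\<^sup>2 * A / c\<eta>))"
      using eps c Apos Warg by (intro mult_pos_pos add_pos_nonneg) auto
    then show ?thesis using Tbig by simp
  qed
  have ET: "0 \<le> E T"
  proof -
    have t: "T \<in> {1..T}" "Suc T \<in> {1..T+1}" using Tpos by auto
    show ?thesis unfolding E_def using KL_nonneg[OF wS[OF t(1)] whS(1)[OF t(2)] whS(2)[OF t(2)]] .
  qed
  have R1: "(\<Sum>t=1..T. lin_loss K (f t) (z t) (what t) - lin_loss K (f t) (z t) (w t))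
      \<le> (\<Sum>t=1..T. (D t - E t) * s t) + c\<^sup>2 / 2 * (\<Sum>t=1..T. \<eta> t)"
  proof -
    have "(\<Sum>t=1..T. lin_loss K (f t) (z t) (what t) - lin_loss K (f t) (z t) (w t))
        \<le> (\<Sum>t=1..T. (D t - E t) * s t + c\<^sup>2 / 2 * \<eta> t)"
      using per by (intro sum_mono) auto
    also have "\<dots> = (\<Sum>t=1..T. (D t - E t) * s t) + c\<^sup>2 / 2 * (\<Sum>t=1..T. \<eta> t)"
      by (simp only: sum.distrib sum_distrib_left)
    finally show ?thesis .
  qed
  have sumeta: "(\<Sum>t=1..T. \<eta> t) \<le> \<eta>0 * (2 / c\<eta> * (sqrt (1 + c\<eta> * real T) - 1))"
  proof -
    have "(\<Sum>t=1..T. \<eta> t) = \<eta>0 * (\<Sum>t=1..T. 1 / sqrt (1 + c\<eta> * real t))"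
      using eta_def by (simp add: sum_distrib_left)
    also have "\<dots> \<le> \<eta>0 * (2 / c\<eta> * (sqrt (1 + c\<eta> * real T) - 1))"
      using sqrt_sum[OF ceta, of T] eta0pos by (intro mult_left_mono) auto
    finally show ?thesis .
  qed
  have Aeq: "A = B + L * (\<Sum>t=2..T. d t)" using A_def PL B_def L_def by simp
  have "(\<Sum>t=1..T. (D t - E t) * s t) \<le> A * s T"
  proof -
    have "E T * s T \<ge> 0" using ET s0 by simp
    then show ?thesis using tele Tpos Aeq by auto
  qed
  define S where "S = sqrt (c\<eta> * A)"
  define Q where "Q = sqrt (1 + c\<eta> * real T)"
  have Spos: "0 < S" using S_def ceta Apos by simp
  have S2: "S\<^sup>2 = c\<eta> * A" using S_def ceta Apos by simp
  have Q0: "0 \<le> Q" using Q_def ct[of T] by simp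
  have Q2: "Q\<^sup>2 = 1 + c\<eta> * real T" using Q_def ct[of T] by simp
  have eta0S: "\<eta>0 = S / c" using eta0_def S_def by simp
  define M where "M = 2 * c * S * Q / c\<eta>"
  have R2: "(\<Sum>t=1..T. lin_loss K (f t) (z t) (what t) - lin_loss K (f t) (z t) (w t)) \<le> M"
  proof -
    have a1: "A * s T = c * S * Q / c\<eta>"
    proof -
      have "A = S\<^sup>2 / c\<eta>" using S2 ceta by simp
      then show ?thesis using Spos c ceta by (simp add: s_eq Q_def eta0S field_simps power2_eq_square)
    qed
    have a2: "c\<^sup>2 / 2 * (\<eta>0 * (2 / c\<eta> * (Q - 1))) \<le> c * S * Q / c\<eta>"
    proof -
      have "c\<^sup>2 / 2 * (\<eta>0 * (2 / c\<eta> * (Q - 1))) = c * S * (Q - 1) / c\<eta>"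
        using c ceta by (simp add: eta0S field_simps power2_eq_square)
      also have "\<dots> \<le> c * S * Q / c\<eta>" using c Spos ceta by (simp add: divide_right_mono)
      finally show ?thesis .
    qed
    have "c\<^sup>2 / 2 * (\<Sum>t=1..T. \<eta> t) \<le> c\<^sup>2 / 2 * (\<eta>0 * (2 / c\<eta> * (Q - 1)))"
      using sumeta unfolding Q_def by (intro mult_left_mono) auto
    moreover have "M = c * S * Q / c\<eta> + c * S * Q / c\<eta>" by (simp add: M_def field_simps)
    ultimately have "(\<Sum>t=1..T. (D t - E t) * s t) + c\<^sup>2 / 2 * (\<Sum>t=1..T. \<eta> t) \<le> M"
      using \<open>(\<Sum>t=1..T. (D t - E t) * s t) \<le> A * s T\<close> a1 a2
      by (metis (no_types, lifting) add_mono order_trans)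
    then show ?thesis using R1 by (rule order_trans[rotated])
  qed
  have M0: "0 \<le> M" using c Spos Q0 ceta by (simp add: M_def)
  have M2: "M\<^sup>2 = 4 * c\<^sup>2 * A * (real T + 1 / c\<eta>)"
  proof -
    have "M\<^sup>2 = 4 * c\<^sup>2 * S\<^sup>2 * Q\<^sup>2 / c\<eta>\<^sup>2" by (simp add: M_def power_mult_distrib power_divide)
    also have "\<dots> = 4 * c\<^sup>2 * (c\<eta> * A) * (1 + c\<eta> * real T) / c\<eta>\<^sup>2" by (simp only: S2 Q2)
    also have "\<dots> = 4 * c\<^sup>2 * A * (real T + 1 / c\<eta>)" using ceta by (simp add: field_simps power2_eq_square)
    finally show ?thesis .
  qed
  have quad: "4 * c\<^sup>2 * A * (real T + 1 / c\<eta>) \<le> (\<epsilon> * real T)\<^sup>2"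
  proof -
    define W where "W = sqrt (c ^ 4 * A\<^sup>2 + \<epsilon>\<^sup>2 * c\<^sup>2 * A / c\<eta>)"
    have W2: "W\<^sup>2 = c ^ 4 * A\<^sup>2 + \<epsilon>\<^sup>2 * c\<^sup>2 * A / c\<eta>"
      unfolding W_def by (rule real_sqrt_pow2[OF Warg])
    have W0: "0 \<le> W" using Warg by (simp add: W_def)
    define r where "r = 2 / \<epsilon>\<^sup>2 * (c\<^sup>2 * A + W)"
    define r' where "r' = 2 / \<epsilon>\<^sup>2 * (c\<^sup>2 * A - W)"
    have Tr: "r \<le> real T" using Tbig by (simp add: r_def W_def)
    have rr: "r' \<le> r" using W0 eps by (simp add: r_def r'_def divide_right_mono mult_left_mono)
    have id: "(\<epsilon> * real T)\<^sup>2 - 4 * c\<^sup>2 * A * (real T + 1 / c\<eta>) = \<epsilon>\<^sup>2 * ((real T - r) * (real T - r'))"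
    proof -
      have "\<epsilon>\<^sup>2 * (r + r') = 4 * c\<^sup>2 * A" using eps by (simp add: r_def r'_def field_simps)
      moreover have "\<epsilon>\<^sup>2 * (r * r') = - 4 * c\<^sup>2 * A / c\<eta>"
      proof -
        have "r * r' = 4 / (\<epsilon>\<^sup>2 * \<epsilon>\<^sup>2) * ((c\<^sup>2 * A)\<^sup>2 - W\<^sup>2)"
          by (simp add: r_def r'_def power2_eq_square field_simps)
        also have "\<dots> = 4 / (\<epsilon>\<^sup>2 * \<epsilon>\<^sup>2) * (- (\<epsilon>\<^sup>2 * c\<^sup>2 * A / c\<eta>))"
          by (simp add: W2 power_mult_distrib)
        finally show ?thesis using eps by (simp add: field_simps power2_eq_square)
      qed
      ultimately have e1: "\<epsilon>\<^sup>2 * (r + r') = 4 * c\<^sup>2 * A" and e2: "\<epsilon>\<^sup>2 * (r * r') = - 4 * c\<^sup>2 * A / c\<eta>" by auto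
      have "\<epsilon>\<^sup>2 * ((real T - r) * (real T - r')) = \<epsilon>\<^sup>2 * (real T)\<^sup>2 - (\<epsilon>\<^sup>2 * (r + r')) * real T + \<epsilon>\<^sup>2 * (r * r')"
        by (simp add: algebra_simps power2_eq_square)
      also have "\<dots> = \<epsilon>\<^sup>2 * (real T)\<^sup>2 - (4 * c\<^sup>2 * A) * real T + (- 4 * c\<^sup>2 * A / c\<eta>)"
        by (simp only: e1 e2)
      also have "\<dots> = (\<epsilon> * real T)\<^sup>2 - 4 * c\<^sup>2 * A * (real T + 1 / c\<eta>)"
        by (simp add: power_mult_distrib algebra_simps)
      finally show ?thesis by simp
    qed
    have "0 \<le> \<epsilon>\<^sup>2 * ((real T - r) * (real T - r'))" using Tr rr by simp
    then show ?thesis using id by linarith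
  qed
  have Msq: "M\<^sup>2 \<le> (\<epsilon> * real T)\<^sup>2" using M2 quad by (simp only:)
  have eT: "0 \<le> \<epsilon> * real T" using eps by simp
  have "M \<le> \<epsilon> * real T" by (rule power2_le_imp_le[OF Msq eT])
  then have "(\<Sum>t=1..T. lin_loss K (f t) (z t) (what t) - lin_loss K (f t) (z t) (w t)) \<le> \<epsilon> * real T"
    using R2 by linarith
  then show ?thesis using Tpos by (simp add: field_simps)
qed

end
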